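(* Under the assumptions below, for every $\epsilon\in(0,1)$, $v^\epsilon\ge g^\epsilon$ on $E_T$, where $v^\epsilon$ is the bounded classical solution in $H^{2+\frac{\beta-\alpha}{2},1+\frac{\beta-\alpha}{4}}(E_T)$ ($\beta\in(\alpha,2)$) of $$(\partial_t-\mathcal{L}_D-I+r)v^\epsilon+p_\epsilon(v^\epsilon-g^\epsilon)=0\ \text{ on }\mathbb{R}\times(0,T],\qquad v^\epsilon(x,0)=g^\epsilon(x).$$ Assumptions: $T>0$, $E_T=\mathbb{R}\times[0,T]$; $a,b,r\in H^{\ell,\ell/2}(E_T)$ for some $\ell>1$, $r\ge0$, $a\ge\lambda>0$ on $E_T$; $\nu$ is a Lévy measure with $\int_{|y|>1}|y|\,\nu(dy)<\infty$ and a density $\rho$ with $\rho(y)\le M/|y|^{1+\alpha}$ for $|y|\le1$, $M>0$, $1\le\alpha<2$; $g$ satisfies $0\le g\le K$, is $L$-Lipschitz, and $\partial^2_{xx}g\ge-J_0$ distributionally.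
   Context: $\mathcal{L}_Dv=a\,\partial^2_{xx}v+b\,\partial_xv$, $Iv(x,t)=\int_{\mathbb{R}}[v(x+y,t)-v(x,t)-y\,\partial_xv(x,t)\mathbf{1}_{\{|y|\le1\}}]\nu(dy)$. $(g^\epsilon)$ are smooth mollifications of $g$ with $\partial^2_{xx}g^\epsilon\ge-J_0$, $0\le g^\epsilon\le K$, $|(g^\epsilon)'|\le L$. Each $p_\epsilon\in C^\infty(\mathbb{R})$ satisfies: $p_\epsilon\le0$; $p_\epsilon(y)=0$ for $y\ge\epsilon$; $p_\epsilon(0)=-a^{(0)}J_0-|b|^{(0)}L-r^{(0)}K-J_0\int_{|y|\le1}|y|^2\nu(dy)-K\int_{|y|>1}\nu(dy)$ with $a^{(0)}=\max_{E_T}a$, $|b|^{(0)}=\max_{E_T}|b|$, $r^{(0)}=\max_{E_T}r$; $p_\epsilon'\ge0$; $p_\epsilon''\le0$; $p_\epsilon(y)\to0$ for $y>0$ and $\to-\infty$ for $y<0$ as $\epsilon\downarrow0$. $H^{\gamma,\gamma/2}(E_T)$ denotes the parabolic Hölder space of order $\gamma$ (non-integer) on $E_T$. *)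

theory Defs
  imports "HOL-Analysis.Analysis"
begin

definition smooth_fun :: "(real \<Rightarrow> real) \<Rightarrow> bool" where
  "smooth_fun f \<longleftrightarrow> (\<forall>k x. ((deriv ^^ k) f) differentiable (at x))"

text \<open>Parabolic Hoelder space H^{l,l/2}(E_T), E_T = R x [0,T], l > 0 non-integer
  (Ladyzhenskaya-Solonnikov-Uraltseva): D i j stands for the derivative
  d_t^i d_x^j u, defined for 2i+j <= [l]; all are bounded and continuous on E_T,
  those with 2i+j = [l] are (l-[l])-Hoelder in x, and those with 0 < l-2i-j < 2
  are ((l-2i-j)/2)-Hoelder in t.\<close>
definition par_holder :: "real \<Rightarrow> real \<Rightarrow> (real \<Rightarrow> real \<Rightarrow> real) \<Rightarrow> bool" where
  "par_holder T l u \<longleftrightarrow> l > 0 \<and> l \<notin> \<int> \<and>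
    (\<exists>D :: nat \<Rightarrow> nat \<Rightarrow> real \<Rightarrow> real \<Rightarrow> real.
      (\<forall>x t. t \<in> {0..T} \<longrightarrow> D 0 0 x t = u x t) \<and>
      (\<forall>i j x t. 2*i + j + 1 \<le> nat \<lfloor>l\<rfloor> \<and> t \<in> {0..T} \<longrightarrow>
         ((\<lambda>y. D i j y t) has_real_derivative D i (Suc j) x t) (at x)) \<and>
      (\<forall>i j x t. 2*(i+1) + j \<le> nat \<lfloor>l\<rfloor> \<and> t \<in> {0..T} \<longrightarrow>
         ((\<lambda>s. D i j x s) has_real_derivative D (Suc i) j x t) (at t within {0..T})) \<and>
      (\<forall>i j. 2*i + j \<le> nat \<lfloor>l\<rfloor> \<longrightarrow>
         continuous_on (UNIV \<times> {0..T}) (\<lambda>(x,t). D i j x t) \<and>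
         (\<exists>C. \<forall>x t. t \<in> {0..T} \<longrightarrow> \<bar>D i j x t\<bar> \<le> C)) \<and>
      (\<forall>i j. 2*i + j = nat \<lfloor>l\<rfloor> \<longrightarrow>
         (\<exists>C. \<forall>x y t. t \<in> {0..T} \<longrightarrow>
            \<bar>D i j x t - D i j y t\<bar> \<le> C * \<bar>x - y\<bar> powr (l - of_int \<lfloor>l\<rfloor>))) \<and>
      (\<forall>i j. 2*i + j \<le> nat \<lfloor>l\<rfloor> \<and> l - real (2*i + j) < 2 \<longrightarrow>
         (\<exists>C. \<forall>x t s. t \<in> {0..T} \<and> s \<in> {0..T} \<longrightarrow>
            \<bar>D i j x t - D i j x s\<bar> \<le> C * \<bar>t - s\<bar> powr ((l - real (2*i + j)) / 2))))"

definition Dx :: "(real \<Rightarrow> real \<Rightarrow> real) \<Rightarrow> real \<Rightarrow> real \<Rightarrow> real" where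
  "Dx v x t = deriv (\<lambda>y. v y t) x"

definition Dxx :: "(real \<Rightarrow> real \<Rightarrow> real) \<Rightarrow> real \<Rightarrow> real \<Rightarrow> real" where
  "Dxx v x t = deriv (\<lambda>y. Dx v y t) x"

definition levy_measure :: "real measure \<Rightarrow> bool" where
  "levy_measure \<nu> \<longleftrightarrow> sets \<nu> = sets borel \<and> emeasure \<nu> {0} = 0 \<and>
     (\<integral>\<^sup>+ y. ennreal (min 1 (y\<^sup>2)) \<partial>\<nu>) < \<infinity>"

definition levy_op :: "real measure \<Rightarrow> (real \<Rightarrow> real \<Rightarrow> real) \<Rightarrow> real \<Rightarrow> real \<Rightarrow> real" where
  "levy_op \<nu> v x t = (\<integral> y. (v (x + y) t - v x t - y * Dx v x t * indicator {-1..1} y) \<partial>\<nu>)"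

definition mollifier :: "(real \<Rightarrow> real) \<Rightarrow> bool" where
  "mollifier \<phi> \<longleftrightarrow> smooth_fun \<phi> \<and> (\<forall>y. 0 \<le> \<phi> y) \<and> (\<forall>y. 1 \<le> \<bar>y\<bar> \<longrightarrow> \<phi> y = 0)
     \<and> (\<phi> has_integral 1) UNIV"

definition dist_second_deriv_ge :: "(real \<Rightarrow> real) \<Rightarrow> real \<Rightarrow> bool" where
  "dist_second_deriv_ge g c \<longleftrightarrow>
     (\<forall>\<psi>. smooth_fun \<psi> \<and> (\<forall>x. 0 \<le> \<psi> x) \<and> (\<exists>R. \<forall>x. R \<le> \<bar>x\<bar> \<longrightarrow> \<psi> x = 0) \<longrightarrow>
        integral UNIV (\<lambda>x. g x * deriv (deriv \<psi>) x) \<ge> c * integral UNIV \<psi>)"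

end

theory Submission
  imports Defs
begin

lemma taylor2:
  fixes f f1 f2 :: "real \<Rightarrow> real"
  assumes d1: "\<And>t. (f has_real_derivative f1 t) (at t)"
    and d2: "\<And>t. (f1 has_real_derivative f2 t) (at t)"
  shows "\<exists>s. f (x+y) = f x + f1 x * y + f2 s / 2 * y^2"
proof (cases "y = 0")
  case True then show ?thesis by simp
next
  case False
  define diff where "diff = (\<lambda>m::nat. if m=0 then f else if m=1 then f1 else f2)"
  have "\<exists>t. (if x+y < x then x+y < t \<and> t < x else x < t \<and> t < x+y) \<and>
    f (x+y) = (\<Sum>m<2. (diff m x / fact m) * (x+y - x)^m) + (diff 2 t / fact 2) * (x+y - x)^2"
    apply (rule Taylor[where a="min x (x+y)" and b="max x (x+y)"])
    using False d1 d2 by (auto simp: diff_def less_2_cases_iff)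
  then obtain t where "f (x+y) = (\<Sum>m<2. (diff m x / fact m) * (x+y - x)^m) + (diff 2 t / fact 2) * (x+y - x)^2"
    by blast
  then show ?thesis by (auto simp: diff_def numeral_2_eq_2 lessThan_Suc)
qed

lemma taylor2_lower:
  fixes f f1 f2 :: "real \<Rightarrow> real"
  assumes "\<And>t. (f has_real_derivative f1 t) (at t)"
    and "\<And>t. (f1 has_real_derivative f2 t) (at t)"
    and "\<And>t. c \<le> f2 t"
  shows "c / 2 * y^2 \<le> f (x+y) - f x - f1 x * y"
proof -
  obtain s where "f (x+y) = f x + f1 x * y + f2 s / 2 * y^2" using taylor2[OF assms(1,2)] by blast
  moreover have "c / 2 * y^2 \<le> f2 s / 2 * y^2"
    using assms(3)[of s] by (intro mult_right_mono) auto
  ultimately show ?thesis by simp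
qed

lemma taylor2_upper:
  fixes f f1 f2 :: "real \<Rightarrow> real"
  assumes "\<And>t. (f has_real_derivative f1 t) (at t)"
    and "\<And>t. (f1 has_real_derivative f2 t) (at t)"
    and "\<And>t. f2 t \<le> c"
  shows "f (x+y) - f x - f1 x * y \<le> c / 2 * y^2"
proof -
  obtain s where "f (x+y) = f x + f1 x * y + f2 s / 2 * y^2" using taylor2[OF assms(1,2)] by blast
  moreover have "f2 s / 2 * y^2 \<le> c / 2 * y^2"
    using assms(3)[of s] by (intro mult_right_mono) auto
  ultimately show ?thesis by simp
qed

lemma lip_from_deriv:
  fixes f f1 :: "real \<Rightarrow> real"
  assumes "\<And>t. (f has_real_derivative f1 t) (at t)" and "\<And>t. \<bar>f1 t\<bar> \<le> c"
  shows "\<bar>f x - f y\<bar> \<le> c * \<bar>x - y\<bar>"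
proof (cases "x = y")
  case True then show ?thesis by simp
next
  case False
  have key: "\<bar>f b - f a\<bar> \<le> c * \<bar>b - a\<bar>" if ab: "a < b" for a b
  proof -
    obtain z where "f b - f a = (b - a) * f1 z" using MVT2[OF ab, of f f1] assms(1) by blast
    then have "\<bar>f b - f a\<bar> = \<bar>b - a\<bar> * \<bar>f1 z\<bar>" by (simp add: abs_mult)
    also have "\<dots> \<le> \<bar>b - a\<bar> * c" by (intro mult_left_mono assms(2)) auto
    finally show ?thesis by (simp add: mult.commute)
  qed
  show ?thesis
  proof (cases "x < y")
    case True then show ?thesis using key[of x y] by (simp add: abs_minus_commute)
  next
    case False then show ?thesis using key[of y x] \<open>x \<noteq> y\<close> by (simp add: abs_minus_commute)
  qed
qed

lemma secder_min:
  fixes f f1 f2 :: "real \<Rightarrow> real"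
  assumes d1: "\<And>t. (f has_real_derivative f1 t) (at t)"
    and d2: "(f1 has_real_derivative f2 x) (at x)"
    and mn: "\<And>y. f x \<le> f y"
  shows "f1 x = 0" "0 \<le> f2 x"
proof -
  show f10: "f1 x = 0" using DERIV_local_min[OF d1[of x], of 1] mn by auto
  show "0 \<le> f2 x"
  proof (rule ccontr)
    assume "\<not> 0 \<le> f2 x"
    then obtain d where d: "d > 0" "\<forall>h>0. h < d \<longrightarrow> f1 x > f1 (x + h)"
      using DERIV_neg_dec_right[OF d2] by auto
    obtain z where z: "x < z" "z < x + d/2" "f (x + d/2) - f x = (x + d/2 - x) * f1 z"
      using MVT2[of x "x + d/2" f f1] d1 d by auto
    have "f1 z < 0" using d(2)[rule_format, of "z - x"] z f10 d by auto
    then have "(x + d/2 - x) * f1 z < 0" using d by (simp add: mult_pos_neg)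
    then have "f (x + d/2) - f x < 0" using z(3) by linarith
    then show False using mn[of "x + d/2"] by simp
  qed
qed

lemma time_min:
  fixes f :: "real \<Rightarrow> real"
  assumes "(f has_real_derivative D) (at t within {0..T})" "0 < t" "t \<le> T"
    and "\<And>s. s \<in> {0..T} \<Longrightarrow> f t \<le> f s"
  shows "D \<le> 0"
proof (rule ccontr)
  assume "\<not> D \<le> 0"
  then obtain d where d: "d > 0" "\<forall>h>0. t - h \<in> {0..T} \<longrightarrow> h < d \<longrightarrow> f (t - h) < f t"
    using has_real_derivative_pos_inc_left[OF assms(1)] by auto
  define h where "h = min (d/2) t"
  have "f (t - h) < f t" using d assms(2,3) by (intro d(2)[rule_format]) (auto simp: h_def)
  moreover have "f t \<le> f (t - h)" using assms(2,3) d by (intro assms(4)) (auto simp: h_def)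
  ultimately show False by simp
qed

definition psi :: "real \<Rightarrow> real" where "psi x = sqrt (1 + x\<^sup>2)"
definition psi1 :: "real \<Rightarrow> real" where "psi1 x = x / sqrt (1 + x\<^sup>2)"
definition psi2 :: "real \<Rightarrow> real" where "psi2 x = 1 / (sqrt (1 + x\<^sup>2) ^ 3)"

lemma sq_pos: "0 < 1 + (x::real)\<^sup>2" by (simp add: add_pos_nonneg)

lemma psi_deriv: "(psi has_real_derivative psi1 x) (at x)"
proof -
  have s: "sqrt (1 + x\<^sup>2) > 0" using sq_pos by simp
  have "((\<lambda>x. sqrt (1 + x\<^sup>2)) has_real_derivative (inverse (sqrt (1 + x\<^sup>2)) / 2 * (2 * x))) (at x)"
    by (rule DERIV_chain2[where f=sqrt and g="\<lambda>x. 1 + x\<^sup>2", OF DERIV_real_sqrt[OF sq_pos[of x]]]) (auto intro!: derivative_eq_intros)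
  then show ?thesis unfolding psi_def psi1_def
    by (rule DERIV_cong) (simp add: field_simps)
qed

lemma psi1_deriv: "(psi1 has_real_derivative psi2 x) (at x)"
proof -
  have s: "sqrt (1 + x\<^sup>2) > 0" using sq_pos by simp
  have ss: "sqrt (1 + x\<^sup>2) * sqrt (1 + x\<^sup>2) = 1 + x\<^sup>2" using sq_pos[of x]
    by (simp add: less_imp_le)
  have d: "((\<lambda>x. sqrt (1 + x\<^sup>2)) has_real_derivative (inverse (sqrt (1 + x\<^sup>2)) / 2 * (2 * x))) (at x)"
    by (rule DERIV_chain2[where f=sqrt and g="\<lambda>x. 1 + x\<^sup>2", OF DERIV_real_sqrt[OF sq_pos[of x]]]) (auto intro!: derivative_eq_intros)
  have "((\<lambda>x. x / sqrt (1 + x\<^sup>2)) has_real_derivative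
     (1 * sqrt (1 + x\<^sup>2) - x * (inverse (sqrt (1 + x\<^sup>2)) / 2 * (2 * x))) / (sqrt (1 + x\<^sup>2) * sqrt (1 + x\<^sup>2))) (at x)"
    by (rule DERIV_divide[OF DERIV_ident d]) (use s in simp)
  then show ?thesis unfolding psi1_def psi2_def
    apply (rule DERIV_cong)
    using s ss by (simp add: field_simps power3_eq_cube power2_eq_square)
qed

lemma psi_ge_abs: "\<bar>x\<bar> \<le> psi x"
  unfolding psi_def by (rule real_le_rsqrt) simp

lemma psi_ge1: "1 \<le> psi x"
  unfolding psi_def by simp

lemma psi1_bd: "\<bar>psi1 x\<bar> \<le> 1"
proof -
  have a: "\<bar>x\<bar> \<le> sqrt (1 + x\<^sup>2)" by (rule real_le_rsqrt) simp
  have s: "sqrt (1 + x\<^sup>2) > 0" using sq_pos by simp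
  have "\<bar>psi1 x\<bar> = \<bar>x\<bar> / sqrt (1 + x\<^sup>2)" unfolding psi1_def abs_divide by simp
  also have "\<dots> \<le> 1" by (rule mult_imp_div_pos_le[OF s]) (use a in simp)
  finally show ?thesis .
qed

lemma psi2_bd: "psi2 x \<le> 1"
proof -
  have "1 \<le> sqrt (1 + x\<^sup>2)" by simp
  then have a: "1 \<le> sqrt (1 + x\<^sup>2) ^ 3" by (rule one_le_power)
  then have s: "0 < sqrt (1 + x\<^sup>2) ^ 3" by linarith
  show ?thesis unfolding psi2_def by (rule mult_imp_div_pos_le[OF s]) (use a in simp)
qed

lemma psi_cont: "continuous_on UNIV psi"
  unfolding psi_def by (intro continuous_intros)

lemma par_holder_bdd:
  assumes "par_holder T l u"
  shows "\<exists>C. \<forall>x t. t \<in> {0..T} \<longrightarrow> \<bar>u x t\<bar> \<le> C"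
proof -
  from assms obtain D :: "nat \<Rightarrow> nat \<Rightarrow> real \<Rightarrow> real \<Rightarrow> real" where
    D0: "\<forall>x t. t \<in> {0..T} \<longrightarrow> D 0 0 x t = u x t" and
    B: "\<forall>i j. 2*i + j \<le> nat \<lfloor>l\<rfloor> \<longrightarrow>
         continuous_on (UNIV \<times> {0..T}) (\<lambda>(x,t). D i j x t) \<and>
         (\<exists>C. \<forall>x t. t \<in> {0..T} \<longrightarrow> \<bar>D i j x t\<bar> \<le> C)"
    using assms unfolding par_holder_def by (elim conjE exE) blast
  from B[rule_format, of 0 0] obtain C where "\<forall>x t. t \<in> {0..T} \<longrightarrow> \<bar>D 0 0 x t\<bar> \<le> C" by auto
  then have "\<forall>x t. t \<in> {0..T} \<longrightarrow> \<bar>u x t\<bar> \<le> C" using D0 by simp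
  then show ?thesis by blast
qed

lemma sup_ge:
  fixes u :: "real \<Rightarrow> real \<Rightarrow> real"
  assumes "\<exists>C. \<forall>x t. t \<in> {0..T} \<longrightarrow> \<bar>u x t\<bar> \<le> C" "t \<in> {0..T}"
  shows "u x t \<le> Sup ((\<lambda>(x,t). u x t) ` (UNIV \<times> {0..T}))"
proof -
  obtain C where C: "\<forall>x t. t \<in> {0..T} \<longrightarrow> \<bar>u x t\<bar> \<le> C" using assms by blast
  have "bdd_above ((\<lambda>(x,t). u x t) ` (UNIV \<times> {0..T}))"
  proof (rule bdd_aboveI[of _ C])
    fix y assume "y \<in> (\<lambda>(x,t). u x t) ` (UNIV \<times> {0..T})"
    then obtain x' t' where "t' \<in> {0..T}" "y = u x' t'" by auto
    then show "y \<le> C" using C[rule_format, of t' x'] by linarith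
  qed
  moreover have "u x t \<in> (\<lambda>(x,t). u x t) ` (UNIV \<times> {0..T})"
    using assms(2) by (intro image_eqI[of _ _ "(x,t)"]) auto
  ultimately show ?thesis by (rule cSup_upper[rotated])
qed

theorem lemma4p7:
  fixes T l lam M \<alpha> \<beta> K L J0 \<epsilon> :: real
    and a b r v :: "real \<Rightarrow> real \<Rightarrow> real"
    and g \<phi> :: "real \<Rightarrow> real"
    and g\<epsilon> p\<epsilon> :: "real \<Rightarrow> real \<Rightarrow> real"
    and \<nu> :: "real measure" and \<rho> :: "real \<Rightarrow> ennreal"
  assumes T: "T > 0"
    and l: "l > 1"
    and a_H: "par_holder T l a" and b_H: "par_holder T l b" and r_H: "par_holder T l r"
    and r_nonneg: "\<forall>x t. t \<in> {0..T} \<longrightarrow> 0 \<le> r x t"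
    and lam: "lam > 0" and a_ge: "\<forall>x t. t \<in> {0..T} \<longrightarrow> lam \<le> a x t"
    and levy: "levy_measure \<nu>"
    and nu_tail: "(\<integral>\<^sup>+ y. ennreal (\<bar>y\<bar> * indicator {y. 1 < \<bar>y\<bar>} y) \<partial>\<nu>) < \<infinity>"
    and rho_meas: "\<rho> \<in> borel_measurable borel"
    and nu_dens: "\<nu> = density lborel \<rho>"
    and M: "M > 0" and \<alpha>: "1 \<le> \<alpha>" "\<alpha> < 2"
    and rho_bd: "\<forall>y. y \<noteq> 0 \<and> \<bar>y\<bar> \<le> 1 \<longrightarrow> \<rho> y \<le> ennreal (M / \<bar>y\<bar> powr (1 + \<alpha>))"
    and g_bd: "\<forall>x. 0 \<le> g x \<and> g x \<le> K"
    and g_lip: "\<forall>x y. \<bar>g x - g y\<bar> \<le> L * \<bar>x - y\<bar>"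
    and g_conv: "dist_second_deriv_ge g (- J0)"
    and moll: "mollifier \<phi>"
    and g\<epsilon>_def: "\<forall>e x. 0 < e \<and> e < 1 \<longrightarrow>
                     g\<epsilon> e x = integral UNIV (\<lambda>y. g (x - y) * \<phi> (y / e) / e)"
    and g\<epsilon>_smooth: "\<forall>e. 0 < e \<and> e < 1 \<longrightarrow> smooth_fun (g\<epsilon> e)"
    and g\<epsilon>_conv: "\<forall>e x. 0 < e \<and> e < 1 \<longrightarrow> - J0 \<le> deriv (deriv (g\<epsilon> e)) x"
    and g\<epsilon>_bd: "\<forall>e x. 0 < e \<and> e < 1 \<longrightarrow> 0 \<le> g\<epsilon> e x \<and> g\<epsilon> e x \<le> K"
    and g\<epsilon>_lip: "\<forall>e x. 0 < e \<and> e < 1 \<longrightarrow> \<bar>deriv (g\<epsilon> e) x\<bar> \<le> L"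
    and p_smooth: "\<forall>e. 0 < e \<and> e < 1 \<longrightarrow> smooth_fun (p\<epsilon> e)"
    and p_nonpos: "\<forall>e y. 0 < e \<and> e < 1 \<longrightarrow> p\<epsilon> e y \<le> 0"
    and p_zero: "\<forall>e y. 0 < e \<and> e < 1 \<and> e \<le> y \<longrightarrow> p\<epsilon> e y = 0"
    and p_at0: "\<forall>e. 0 < e \<and> e < 1 \<longrightarrow>
        p\<epsilon> e 0 = - (Sup ((\<lambda>(x,t). a x t) ` (UNIV \<times> {0..T}))) * J0
                 - (Sup ((\<lambda>(x,t). \<bar>b x t\<bar>) ` (UNIV \<times> {0..T}))) * L
                 - (Sup ((\<lambda>(x,t). r x t) ` (UNIV \<times> {0..T}))) * K
                 - J0 * (\<integral> y. y\<^sup>2 * indicator {-1..1} y \<partial>\<nu>)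
                 - K * measure \<nu> {y. 1 < \<bar>y\<bar>}"
    and p_mono: "\<forall>e y. 0 < e \<and> e < 1 \<longrightarrow> 0 \<le> deriv (p\<epsilon> e) y"
    and p_conc: "\<forall>e y. 0 < e \<and> e < 1 \<longrightarrow> deriv (deriv (p\<epsilon> e)) y \<le> 0"
    and p_lim_pos: "\<forall>y. 0 < y \<longrightarrow> ((\<lambda>e. p\<epsilon> e y) \<longlongrightarrow> 0) (at_right 0)"
    and p_lim_neg: "\<forall>y. y < 0 \<longrightarrow> filterlim (\<lambda>e. p\<epsilon> e y) at_bot (at_right 0)"
    and \<beta>: "\<alpha> < \<beta>" "\<beta> < 2"
    and \<epsilon>: "0 < \<epsilon>" "\<epsilon> < 1"
    and v_H: "par_holder T (2 + (\<beta> - \<alpha>) / 2) v"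
    and v_bdd: "\<exists>C. \<forall>x t. t \<in> {0..T} \<longrightarrow> \<bar>v x t\<bar> \<le> C"
    and v_eq: "\<forall>x t. t \<in> {0<..T} \<longrightarrow>
        ((\<lambda>s. v x s) has_real_derivative
           (a x t * Dxx v x t + b x t * Dx v x t + levy_op \<nu> v x t - r x t * v x t
            - p\<epsilon> \<epsilon> (v x t - g\<epsilon> \<epsilon> x))) (at t within {0..T})"
    and v_init: "\<forall>x. v x 0 = g\<epsilon> \<epsilon> x"
  shows "\<forall>x t. t \<in> {0..T} \<longrightarrow> g\<epsilon> \<epsilon> x \<le> v x t"
proof -
  define G where "G = g\<epsilon> \<epsilon>"
  define P where "P = p\<epsilon> \<epsilon>"
  define G1 where "G1 = deriv G"
  define G2 where "G2 = deriv G1"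
  have eps01: "0 < \<epsilon> \<and> \<epsilon> < 1" using \<epsilon> by simp
  have Gsm: "smooth_fun G" using g\<epsilon>_smooth eps01 by (simp add: G_def)
  have hG: "(G has_real_derivative G1 t) (at t)" for t
  proof -
    have "((deriv ^^ 0) G) differentiable (at t)" using Gsm unfolding smooth_fun_def by (rule allE) (erule allE)
    then show ?thesis unfolding G1_def by (simp add: DERIV_deriv_iff_real_differentiable)
  qed
  have hG1: "(G1 has_real_derivative G2 t) (at t)" for t
  proof -
    have "((deriv ^^ 1) G) differentiable (at t)" using Gsm unfolding smooth_fun_def by (rule allE) (erule allE)
    then show ?thesis unfolding G1_def G2_def by (simp add: DERIV_deriv_iff_real_differentiable)
  qed
  have G2ge: "- J0 \<le> G2 t" for t using g\<epsilon>_conv eps01 by (simp add: G_def G1_def G2_def)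
  have G1bd: "\<bar>G1 t\<bar> \<le> L" for t using g\<epsilon>_lip eps01 by (simp add: G_def G1_def)
  have Gbd: "0 \<le> G t \<and> G t \<le> K" for t using g\<epsilon>_bd eps01 by (simp add: G_def)
  have L0: "0 \<le> L" using G1bd[of 0] by linarith
  have K0: "0 \<le> K" using Gbd[of 0] by linarith
  have J0: "0 \<le> J0"
  proof (rule ccontr)
    assume "\<not> 0 \<le> J0"
    then have c: "- J0 > 0" by simp
    define X where "X = (2*L+1) / (- J0)"
    have X: "X > 0" unfolding X_def using c L0 by (intro divide_pos_pos) auto
    obtain z where "G1 X - G1 0 = (X - 0) * G2 z" using MVT2[OF X, of G1 G2] hG1 by blast
    moreover have "X * (- J0) \<le> X * G2 z" using G2ge[of z] X by (intro mult_left_mono) auto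
    moreover have "X * (- J0) = 2*L+1" using c by (simp add: X_def)
    ultimately have "G1 X - G1 0 \<ge> 2*L+1" by simp
    moreover have "\<bar>G1 X - G1 0\<bar> \<le> 2*L" using G1bd[of X] G1bd[of 0] by linarith
    ultimately show False by linarith
  qed
  have Pmono: "P x \<le> P y" if "x \<le> y" for x y
  proof -
    have "smooth_fun P" using p_smooth eps01 by (simp add: P_def)
    then have "(deriv ^^ 0) P differentiable (at t)" for t
      unfolding smooth_fun_def by (rule allE) (erule allE)
    then have "(P has_real_derivative deriv P t) (at t)" for t
      by (simp add: DERIV_deriv_iff_real_differentiable)
    moreover have "0 \<le> deriv P t" for t using p_mono eps01 by (simp add: P_def)
    ultimately show ?thesis using DERIV_nonneg_imp_nondecreasing[OF that] by blast
  qed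
  define l' where "l' = 2 + (\<beta> - \<alpha>) / 2"
  have fl: "nat \<lfloor>l'\<rfloor> = 2"
  proof -
    have "\<lfloor>l'\<rfloor> = 2" unfolding l'_def using \<alpha> \<beta> by (intro floor_unique) auto
    then show ?thesis by simp
  qed
  obtain D :: "nat \<Rightarrow> nat \<Rightarrow> real \<Rightarrow> real \<Rightarrow> real" where
    D0: "\<forall>x t. t \<in> {0..T} \<longrightarrow> D 0 0 x t = v x t" and
    Dx1: "\<forall>i j x t. 2*i + j + 1 \<le> nat \<lfloor>l'\<rfloor> \<and> t \<in> {0..T} \<longrightarrow>
         ((\<lambda>y. D i j y t) has_real_derivative D i (Suc j) x t) (at x)" and
    DB: "\<forall>i j. 2*i + j \<le> nat \<lfloor>l'\<rfloor> \<longrightarrow>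
         continuous_on (UNIV \<times> {0..T}) (\<lambda>(x,t). D i j x t) \<and>
         (\<exists>C. \<forall>x t. t \<in> {0..T} \<longrightarrow> \<bar>D i j x t\<bar> \<le> C)"
    using v_H unfolding par_holder_def l'_def[symmetric] by (elim conjE exE) blast
  have vx: "((\<lambda>y. v y t) has_real_derivative D 0 1 x t) (at x)" if "t \<in> {0..T}" for x t
  proof -
    have "((\<lambda>y. D 0 0 y t) has_real_derivative D 0 (Suc 0) x t) (at x)"
      using Dx1[rule_format, of 0 0 t x] that fl by simp
    moreover have "(\<lambda>y. D 0 0 y t) = (\<lambda>y. v y t)" using D0 that by auto
    ultimately show ?thesis by simp
  qed
  have vxx: "((\<lambda>y. D 0 1 y t) has_real_derivative D 0 2 x t) (at x)" if "t \<in> {0..T}" for x t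
    using Dx1[rule_format, of 0 1 t x] that fl by (simp add: numeral_2_eq_2)
  have Dxv: "Dx v x t = D 0 1 x t" if "t \<in> {0..T}" for x t
    unfolding Dx_def using vx[OF that] by (rule DERIV_imp_deriv)
  have Dxxv: "Dxx v x t = D 0 2 x t" if "t \<in> {0..T}" for x t
  proof -
    have "(\<lambda>y. Dx v y t) = (\<lambda>y. D 0 1 y t)" using Dxv that by auto
    then show ?thesis unfolding Dxx_def using vxx[OF that] by (simp add: DERIV_imp_deriv)
  qed
  have vcont: "continuous_on (UNIV \<times> {0..T}) (\<lambda>p. v (fst p) (snd p))"
  proof -
    have "continuous_on (UNIV \<times> {0..T}) (\<lambda>(x,t). D 0 0 x t)" using DB by simp
    then show ?thesis
      by (rule continuous_on_cong[THEN iffD1, rotated 2]) (use D0 in auto)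
  qed
  have sets_nu: "sets \<nu> = sets borel" using levy unfolding levy_measure_def by simp
  have space_nu: "space \<nu> = UNIV" using sets_eq_imp_space_eq[OF sets_nu] by simp
  have measnu: "f \<in> borel_measurable \<nu>" if "f \<in> borel_measurable borel" for f :: "real \<Rightarrow> real"
    using that by (simp add: measurable_cong_sets[OF sets_nu refl])
  have fin: "(\<integral>\<^sup>+ y. ennreal (min 1 (y\<^sup>2)) \<partial>\<nu>) < \<infinity>" using levy unfolding levy_measure_def by simp
  have ob: "{y::real. 1 < \<bar>y\<bar>} \<in> sets borel"
    by (rule borel_open) (simp add: open_Collect_less continuous_intros)
  have int_Q: "integrable \<nu> (\<lambda>y. y\<^sup>2 * indicator {-1..1} y)"
  proof (rule integrableI_bounded)
    show "(\<lambda>y. y\<^sup>2 * indicator {-1..1} y) \<in> borel_measurable \<nu>" by (rule measnu) measurable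
    have "(\<integral>\<^sup>+ y. ennreal (norm (y\<^sup>2 * indicator {-1..1} y)) \<partial>\<nu>) \<le> (\<integral>\<^sup>+ y. ennreal (min 1 (y\<^sup>2)) \<partial>\<nu>)"
    proof (rule nn_integral_mono)
      fix y :: real
      show "ennreal (norm (y\<^sup>2 * indicator {-1..1} y)) \<le> ennreal (min 1 (y\<^sup>2))"
      proof (cases "y \<in> {-1..1}")
        case True
        then have "\<bar>y\<bar> \<le> 1" by auto
        then have "y\<^sup>2 \<le> 1" by (simp add: abs_square_le_1)
        then show ?thesis using True by simp
      next
        case False then show ?thesis by simp
      qed
    qed
    then show "(\<integral>\<^sup>+ y. ennreal (norm (y\<^sup>2 * indicator {-1..1} y)) \<partial>\<nu>) < \<infinity>" using fin by (rule le_less_trans)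
  qed
  have int_N: "integrable \<nu> (indicator {y::real. 1 < \<bar>y\<bar>} :: real \<Rightarrow> real)"
  proof (rule integrableI_bounded)
    show "(indicator {y::real. 1 < \<bar>y\<bar>} :: real \<Rightarrow> real) \<in> borel_measurable \<nu>"
      by (rule measnu) (rule borel_measurable_indicator[OF ob])
    have "(\<integral>\<^sup>+ y. ennreal (norm (indicator {y::real. 1 < \<bar>y\<bar>} y :: real)) \<partial>\<nu>) \<le> (\<integral>\<^sup>+ y. ennreal (min 1 (y\<^sup>2)) \<partial>\<nu>)"
    proof (rule nn_integral_mono)
      fix y :: real
      show "ennreal (norm (indicator {y::real. 1 < \<bar>y\<bar>} y :: real)) \<le> ennreal (min 1 (y\<^sup>2))"
      proof (cases "1 < \<bar>y\<bar>")
        case True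
        then have "\<not> y\<^sup>2 \<le> 1" by (simp add: abs_square_le_1)
        then show ?thesis using True by simp
      next
        case False then show ?thesis by simp
      qed
    qed
    then show "(\<integral>\<^sup>+ y. ennreal (norm (indicator {y::real. 1 < \<bar>y\<bar>} y :: real)) \<partial>\<nu>) < \<infinity>" using fin by (rule le_less_trans)
  qed
  have int_T: "integrable \<nu> (\<lambda>y. \<bar>y\<bar> * indicator {y. 1 < \<bar>y\<bar>} y)"
  proof (rule integrableI_bounded)
    show "(\<lambda>y. \<bar>y\<bar> * indicator {y. 1 < \<bar>y\<bar>} y) \<in> borel_measurable \<nu>"
      by (rule measnu) (intro borel_measurable_times borel_measurable_indicator[OF ob] borel_measurable_abs measurable_ident_sets refl)
    have "(\<lambda>y. ennreal (norm (\<bar>y\<bar> * indicator {y. 1 < \<bar>y\<bar>} y :: real))) = (\<lambda>y. ennreal (\<bar>y\<bar> * indicator {y. 1 < \<bar>y\<bar>} y))"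
      by (auto simp: indicator_def)
    then show "(\<integral>\<^sup>+ y. ennreal (norm (\<bar>y\<bar> * indicator {y. 1 < \<bar>y\<bar>} y :: real)) \<partial>\<nu>) < \<infinity>" using nu_tail by simp
  qed
  define Q where "Q = (\<integral> y. y\<^sup>2 * indicator {-1..1} y \<partial>\<nu>)"
  define N where "N = measure \<nu> {y. 1 < \<bar>y\<bar>}"
  define Tl where "Tl = (\<integral> y. \<bar>y\<bar> * indicator {y. 1 < \<bar>y\<bar>} y \<partial>\<nu>)"
  have N_int: "(\<integral> y. (indicator {y::real. 1 < \<bar>y\<bar>} y :: real) \<partial>\<nu>) = N"
    unfolding N_def by (simp add: space_nu)
  have Q0: "0 \<le> Q" unfolding Q_def by (rule integral_nonneg_AE) auto
  have N0: "0 \<le> N" unfolding N_def by simp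
  have T0: "0 \<le> Tl" unfolding Tl_def by (rule integral_nonneg_AE) auto
  define A where "A = Sup ((\<lambda>(x,t). a x t) ` (UNIV \<times> {0..T}))"
  define B where "B = Sup ((\<lambda>(x,t). \<bar>b x t\<bar>) ` (UNIV \<times> {0..T}))"
  define Rr where "Rr = Sup ((\<lambda>(x,t). r x t) ` (UNIV \<times> {0..T}))"
  have aA: "a x t \<le> A" if "t \<in> {0..T}" for x t
    unfolding A_def by (rule sup_ge[OF par_holder_bdd[OF a_H] that])
  have rR: "r x t \<le> Rr" if "t \<in> {0..T}" for x t
    unfolding Rr_def by (rule sup_ge[OF par_holder_bdd[OF r_H] that])
  have bB: "\<bar>b x t\<bar> \<le> B" if "t \<in> {0..T}" for x t
  proof -
    obtain C where C: "\<forall>x t. t \<in> {0..T} \<longrightarrow> \<bar>b x t\<bar> \<le> C" using par_holder_bdd[OF b_H] by blast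
    have "\<exists>C. \<forall>x t. t \<in> {0..T} \<longrightarrow> \<bar>\<bar>b x t\<bar>\<bar> \<le> C" using C by auto
    from sup_ge[OF this that, of x] show ?thesis unfolding B_def by simp
  qed
  have P0: "P 0 = - A * J0 - B * L - Rr * K - J0 * Q - K * N"
    using p_at0 eps01 unfolding P_def A_def B_def Rr_def Q_def N_def by simp
  have Gcont: "continuous_on UNIV G"
    by (rule continuous_at_imp_continuous_on) (use hG DERIV_isCont in blast)
  obtain Cv where Cv: "\<forall>x t. t \<in> {0..T} \<longrightarrow> \<bar>v x t\<bar> \<le> Cv" using v_bdd by blast
  show ?thesis
  proof (rule ccontr)
    assume "\<not> ?thesis"
    then obtain x0 t0 where t0: "t0 \<in> {0..T}" and lt: "v x0 t0 < G x0"
      by (auto simp: G_def not_le)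
    define w0 where "w0 = v x0 t0 - G x0"
    have w0: "w0 < 0" using lt by (simp add: w0_def)
    define C0 where "C0 = A + B + Q + Tl"
    define C1 where "C1 = \<bar>C0\<bar> + 1"
    have C1: "C1 \<ge> 0" "C1 > C0" by (auto simp: C1_def)
    have den: "psi x0 + C1 * T > 0" using psi_ge1[of x0] C1 T by (simp add: add_pos_nonneg)
    define \<delta> where "\<delta> = - w0 / (2 * (psi x0 + C1 * T))"
    have dpos: "\<delta> > 0" unfolding \<delta>_def using den w0 by (intro divide_pos_pos) auto
    define Z where "Z = (\<lambda>x t. v x t - G x + \<delta> * psi x + \<delta> * C1 * t)"
    have Z0: "Z x0 t0 < 0"
    proof -
      have e: "\<delta> * (psi x0 + C1 * T) = - w0 / 2" unfolding \<delta>_def using den by (simp add: field_simps)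
      have "\<delta> * C1 * t0 \<le> \<delta> * C1 * T" using t0 dpos C1 by (intro mult_left_mono) auto
      then have "Z x0 t0 \<le> w0 + \<delta> * (psi x0 + C1 * T)"
        unfolding Z_def w0_def by (simp add: algebra_simps)
      then show ?thesis using e w0 by simp
    qed
    have Cv0: "0 \<le> Cv" using Cv t0 by force
    define Rad where "Rad = \<bar>x0\<bar> + (Cv + K) / \<delta>"
    have Radge: "(Cv + K) / \<delta> \<le> Rad" "\<bar>x0\<bar> \<le> Rad"
      using Cv0 K0 dpos by (auto simp: Rad_def)
    have far: "Z x t > 0" if tt: "t \<in> {0..T}" and xx: "\<bar>x\<bar> > Rad" for x t
    proof -
      have "(Cv + K) / \<delta> < \<bar>x\<bar>" using Radge xx by linarith
      then have "Cv + K < \<delta> * \<bar>x\<bar>" using dpos by (simp add: divide_less_eq mult.commute)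
      moreover have "\<delta> * \<bar>x\<bar> \<le> \<delta> * psi x" using psi_ge_abs[of x] dpos by (intro mult_left_mono) auto
      moreover have "\<bar>v x t\<bar> \<le> Cv" using Cv tt by blast
      moreover have "0 \<le> \<delta> * C1 * t" using dpos C1 tt by simp
      ultimately show ?thesis unfolding Z_def using Gbd[of x] by linarith
    qed
    define S where "S = {-Rad..Rad} \<times> {0..T}"
    have cS: "compact S" unfolding S_def by (intro compact_Times compact_Icc)
    have x0S: "(x0, t0) \<in> S" unfolding S_def using Radge t0 by auto
    have contZ: "continuous_on S (\<lambda>p. Z (fst p) (snd p))"
    proof -
      have c1: "continuous_on S (\<lambda>p. v (fst p) (snd p))"
        by (rule continuous_on_subset[OF vcont]) (auto simp: S_def)
      have c2: "continuous_on S (\<lambda>p. G (fst p))"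
        by (rule continuous_on_compose2[OF Gcont continuous_on_fst[OF continuous_on_id]]) auto
      have c3: "continuous_on S (\<lambda>p. psi (fst p))"
        by (rule continuous_on_compose2[OF psi_cont continuous_on_fst[OF continuous_on_id]]) auto
      show ?thesis unfolding Z_def
        by (intro continuous_intros c1 c2 c3)
    qed
    obtain p1 where p1S: "p1 \<in> S" and p1min: "\<forall>q\<in>S. Z (fst p1) (snd p1) \<le> Z (fst q) (snd q)"
      using continuous_attains_inf[OF cS _ contZ] x0S by blast
    define x1 where "x1 = fst p1"
    define t1 where "t1 = snd p1"
    have t1T: "t1 \<in> {0..T}" using p1S by (auto simp: S_def t1_def)
    have Zle0: "Z x1 t1 \<le> Z x0 t0" using p1min x0S by (auto simp: x1_def t1_def)
    have gmin: "Z x1 t1 \<le> Z x t" if tt: "t \<in> {0..T}" for x t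
    proof (cases "\<bar>x\<bar> \<le> Rad")
      case True
      then have "(x,t) \<in> S" using tt by (auto simp: S_def)
      then show ?thesis using p1min by (auto simp: x1_def t1_def)
    next
      case False
      then show ?thesis using far[OF tt, of x] Zle0 Z0 by linarith
    qed
    have Z1: "Z x1 t1 < 0" using Zle0 Z0 by linarith
    have t1pos: "t1 > 0"
    proof (rule ccontr)
      assume "\<not> t1 > 0"
      then have "t1 = 0" using t1T by auto
      then have "Z x1 t1 = \<delta> * psi x1" unfolding Z_def using v_init by (simp add: G_def)
      moreover have "\<delta> * psi x1 > 0" using dpos psi_ge1[of x1] by simp
      ultimately show False using Z1 by simp
    qed
    define w1 where "w1 = v x1 t1 - G x1"
    have w1: "w1 < 0"
    proof -
      have "0 \<le> \<delta> * psi x1" using dpos psi_ge1[of x1] by simp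
      moreover have "0 \<le> \<delta> * C1 * t1" using dpos C1 t1T by simp
      ultimately show ?thesis using Z1 unfolding Z_def w1_def by linarith
    qed
    define f1 where "f1 = (\<lambda>x. D 0 1 x t1 - G1 x + \<delta> * psi1 x)"
    have df: "((\<lambda>x. Z x t1) has_real_derivative f1 y) (at y)" for y
    proof -
      have "((\<lambda>x. v x t1 - G x + \<delta> * psi x + \<delta> * C1 * t1) has_real_derivative
              (D 0 1 y t1 - G1 y + \<delta> * psi1 y + 0)) (at y)"
        by (intro DERIV_add DERIV_diff DERIV_cmult vx[OF t1T] hG psi_deriv DERIV_const)
      then show ?thesis unfolding Z_def f1_def by simp
    qed
    have df1: "(f1 has_real_derivative (D 0 2 x1 t1 - G2 x1 + \<delta> * psi2 x1)) (at x1)"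
      unfolding f1_def by (intro DERIV_add DERIV_diff DERIV_cmult vxx[OF t1T] hG1 psi1_deriv)
    have xmin: "\<And>y. Z x1 t1 \<le> Z y t1" using gmin[OF t1T] .
    have fx: "f1 x1 = 0" and fxx: "0 \<le> D 0 2 x1 t1 - G2 x1 + \<delta> * psi2 x1"
      using secder_min[of "\<lambda>x. Z x t1" f1 "\<lambda>_. D 0 2 x1 t1 - G2 x1 + \<delta> * psi2 x1" x1, OF df _ xmin] df1
      by auto
    have Dx1: "Dx v x1 t1 = G1 x1 - \<delta> * psi1 x1" using fx Dxv[OF t1T] unfolding f1_def by simp
    have Dxx1: "Dxx v x1 t1 \<ge> G2 x1 - \<delta> * psi2 x1" using fxx Dxxv[OF t1T] by simp
    define vt where "vt = a x1 t1 * Dxx v x1 t1 + b x1 t1 * Dx v x1 t1 + levy_op \<nu> v x1 t1 - r x1 t1 * v x1 t1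
            - p\<epsilon> \<epsilon> (v x1 t1 - g\<epsilon> \<epsilon> x1)"
    have t1oc: "t1 \<in> {0<..T}" using t1T t1pos by auto
    have dv: "((\<lambda>s. v x1 s) has_real_derivative vt) (at t1 within {0..T})"
      using v_eq t1oc unfolding vt_def by blast
    have "((\<lambda>s. v x1 s - G x1 + \<delta> * psi x1 + \<delta> * C1 * s) has_real_derivative
              (vt - 0 + 0 + \<delta> * C1 * 1)) (at t1 within {0..T})"
      by (intro DERIV_add DERIV_diff DERIV_cmult dv DERIV_const DERIV_ident)
    then have dZt: "((\<lambda>s. Z x1 s) has_real_derivative (vt + \<delta> * C1)) (at t1 within {0..T})"
      unfolding Z_def by simp
    have tneg: "vt + \<delta> * C1 \<le> 0"
      by (rule time_min[OF dZt t1pos]) (use t1T gmin in auto)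
    define h where "h = (\<lambda>y::real. - (J0 + \<delta>) * (y\<^sup>2 * indicator {-1..1} y) - K * indicator {y. 1 < \<bar>y\<bar>} y
                          - \<delta> * (\<bar>y\<bar> * indicator {y. 1 < \<bar>y\<bar>} y))"
    define Fy where "Fy = (\<lambda>y. v (x1 + y) t1 - v x1 t1 - y * Dx v x1 t1 * indicator {-1..1} y)"
    have hle: "h y \<le> Fy y" for y
    proof -
      have Zd: "0 \<le> Z (x1 + y) t1 - Z x1 t1" using gmin[OF t1T, of "x1 + y"] by simp
      have vv: "v (x1 + y) t1 - v x1 t1 = (Z (x1 + y) t1 - Z x1 t1) + (G (x1 + y) - G x1)
                   - \<delta> * (psi (x1 + y) - psi x1)" unfolding Z_def by (simp add: algebra_simps)
      have tG: "- J0 / 2 * y\<^sup>2 \<le> G (x1 + y) - G x1 - G1 x1 * y"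
        by (rule taylor2_lower[OF hG hG1 G2ge])
      have tP: "psi (x1 + y) - psi x1 - psi1 x1 * y \<le> 1 / 2 * y\<^sup>2"
        by (rule taylor2_upper[OF psi_deriv psi1_deriv psi2_bd])
      have lP: "\<bar>psi (x1 + y) - psi x1\<bar> \<le> 1 * \<bar>x1 + y - x1\<bar>"
        by (rule lip_from_deriv[OF psi_deriv psi1_bd])
      have y2: "0 \<le> y\<^sup>2" by simp
      show ?thesis
      proof (cases "y \<in> {-1..1}")
        case True
        then have "\<not> 1 < \<bar>y\<bar>" by auto
        then have hy: "h y = - (J0 + \<delta>) * y\<^sup>2" unfolding h_def using True by simp
        have Fy: "Fy y = (Z (x1 + y) t1 - Z x1 t1) + (G (x1 + y) - G x1 - G1 x1 * y)
                   - \<delta> * (psi (x1 + y) - psi x1 - psi1 x1 * y)"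
          unfolding Fy_def Dx1 using True vv by (simp add: algebra_simps)
        have "\<delta> * (psi (x1 + y) - psi x1 - psi1 x1 * y) \<le> \<delta> * (1 / 2 * y\<^sup>2)"
          using tP dpos by (intro mult_left_mono) auto
        moreover have "0 \<le> J0 * y\<^sup>2" "0 \<le> \<delta> * y\<^sup>2" using J0 dpos by auto
        ultimately show ?thesis using hy Fy Zd tG by (simp add: algebra_simps)
      next
        case False
        then have g1: "1 < \<bar>y\<bar>" by auto
        then have hy: "h y = - K - \<delta> * \<bar>y\<bar>" unfolding h_def using False by simp
        have Fy: "Fy y = (Z (x1 + y) t1 - Z x1 t1) + (G (x1 + y) - G x1)
                   - \<delta> * (psi (x1 + y) - psi x1)"
          unfolding Fy_def using False vv by simp
        have "\<delta> * (psi (x1 + y) - psi x1) \<le> \<delta> * \<bar>y\<bar>"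
          using lP dpos by (intro mult_left_mono) auto
        then show ?thesis using hy Fy Zd Gbd[of x1] Gbd[of "x1 + y"] by linarith
      qed
    qed
    have int_h: "integrable \<nu> h"
      unfolding h_def using int_Q int_N int_T by simp
    have Ih: "(\<integral> y. h y \<partial>\<nu>) = - (J0 + \<delta>) * Q - K * N - \<delta> * Tl"
      unfolding h_def Q_def Tl_def using int_Q int_N int_T N_int by simp
    have Ibound: "levy_op \<nu> v x1 t1 \<ge> - (J0 + \<delta>) * Q - K * N - \<delta> * Tl"
    proof (cases "integrable \<nu> Fy")
      case True
      have "(\<integral> y. h y \<partial>\<nu>) \<le> (\<integral> y. Fy y \<partial>\<nu>)" by (rule integral_mono[OF int_h True hle])
      then show ?thesis using Ih unfolding levy_op_def Fy_def by simp
    next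
      case False
      then have "levy_op \<nu> v x1 t1 = 0" unfolding levy_op_def Fy_def
        by (simp add: not_integrable_integral_eq)
      moreover have "0 \<le> (J0 + \<delta>) * Q" using J0 dpos Q0 by simp
      moreover have "0 \<le> K * N" "0 \<le> \<delta> * Tl" using K0 N0 dpos T0 by auto
      ultimately show ?thesis by linarith
    qed
    have a1: "0 < a x1 t1" using a_ge[rule_format, OF t1T, of x1] lam by linarith
    have F1: "a x1 t1 * Dxx v x1 t1 \<ge> - (A * (J0 + \<delta>))"
    proof -
      have "\<delta> * psi2 x1 \<le> \<delta> * 1" using psi2_bd[of x1] dpos by (intro mult_left_mono) auto
      then have "Dxx v x1 t1 \<ge> - J0 - \<delta>" using Dxx1 G2ge[of x1] by linarith
      then have "a x1 t1 * Dxx v x1 t1 \<ge> a x1 t1 * (- J0 - \<delta>)" using a1 by (intro mult_left_mono) auto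
      moreover have "a x1 t1 * (J0 + \<delta>) \<le> A * (J0 + \<delta>)" using aA[OF t1T] J0 dpos
        by (intro mult_right_mono) auto
      ultimately show ?thesis by (simp add: algebra_simps)
    qed
    have F2: "b x1 t1 * Dx v x1 t1 \<ge> - (B * (L + \<delta>))"
    proof -
      have "\<bar>\<delta> * psi1 x1\<bar> = \<delta> * \<bar>psi1 x1\<bar>" using dpos by (simp add: abs_mult)
      also have "\<dots> \<le> \<delta> * 1" using psi1_bd[of x1] dpos by (intro mult_left_mono) auto
      finally have "\<bar>\<delta> * psi1 x1\<bar> \<le> \<delta>" by simp
      then have d: "\<bar>Dx v x1 t1\<bar> \<le> L + \<delta>" using Dx1 G1bd[of x1] by linarith
      have "\<bar>b x1 t1 * Dx v x1 t1\<bar> = \<bar>b x1 t1\<bar> * \<bar>Dx v x1 t1\<bar>" by (simp add: abs_mult)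
      also have "\<dots> \<le> \<bar>b x1 t1\<bar> * (L + \<delta>)" by (intro mult_left_mono d) auto
      also have "\<dots> \<le> B * (L + \<delta>)" using bB[OF t1T] L0 dpos by (intro mult_right_mono) auto
      finally show ?thesis by linarith
    qed
    have F3: "r x1 t1 * v x1 t1 \<le> Rr * K"
    proof -
      have r1: "0 \<le> r x1 t1" using r_nonneg t1T by blast
      have "r x1 t1 * v x1 t1 = r x1 t1 * w1 + r x1 t1 * G x1" by (simp add: w1_def algebra_simps)
      moreover have "r x1 t1 * w1 \<le> 0" using r1 w1 by (simp add: mult_nonneg_nonpos)
      moreover have "r x1 t1 * G x1 \<le> r x1 t1 * K" using r1 Gbd[of x1] by (intro mult_left_mono) auto
      moreover have "r x1 t1 * K \<le> Rr * K" using rR[OF t1T] K0 by (intro mult_right_mono) auto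
      ultimately show ?thesis by linarith
    qed
    have F4: "p\<epsilon> \<epsilon> (v x1 t1 - g\<epsilon> \<epsilon> x1) \<le> P 0"
      using Pmono[of w1 0] w1 unfolding P_def w1_def G_def by simp
    have "vt \<ge> - (A * (J0 + \<delta>)) - B * (L + \<delta>) + (- (J0 + \<delta>) * Q - K * N - \<delta> * Tl) - Rr * K - P 0"
      unfolding vt_def using F1 F2 F3 F4 Ibound by linarith
    moreover have "- (A * (J0 + \<delta>)) - B * (L + \<delta>) + (- (J0 + \<delta>) * Q - K * N - \<delta> * Tl) - Rr * K - P 0
        = - (\<delta> * C0)" unfolding P0 C0_def by (simp add: algebra_simps)
    moreover have "\<delta> * C0 < \<delta> * C1" using dpos C1 by simp
    ultimately show False using tneg by linarith
  qed
qed

end
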